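(* A ring $R$ is feckly clean if and only if both of the following hold: (1) $\operatorname{Max}(R)$ is strongly zero-dimensional; (2) for any two distinct maximal ideals $M$ and $N$ of $R$ there exist $a,b\in R$ such that $a\notin M$, $b\notin N$ and $aRb\subseteq J(R)$.
   Context: Rings are associative with identity, not necessarily commutative; ideals are two-sided; $J(R)$ is the Jacobson radical. An element $u\in R$ is full if $RuR=R$. An element $a\in R$ is feckly clean if there exist $e\in R$ and a full element $u\in R$ with $a=e+u$ and $eR(1-e)\subseteq J(R)$; $R$ is feckly clean if every element is feckly clean. $\operatorname{Max}(R)$ is the set of all maximal ideals of $R$, topologized so that the closed sets are exactly the sets $V(I)=\{P\in\operatorname{Max}(R): I\subseteq P\}$ for ideals $I$. A topological space $X$ is strongly zero-dimensional if for any two disjoint closed sets $A,B\subseteq X$ there exist disjoint clopen sets $C_1,C_2$ with $A\subseteq C_1$ and $B\subseteq C_2$. *)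

theory Defs
  imports Main
begin

definition tideal :: "'a::ring_1 set \<Rightarrow> bool" where
  "tideal I \<longleftrightarrow> 0 \<in> I \<and> (\<forall>x\<in>I. \<forall>y\<in>I. x + y \<in> I) \<and> (\<forall>x\<in>I. - x \<in> I)
     \<and> (\<forall>r x. x \<in> I \<longrightarrow> r * x \<in> I \<and> x * r \<in> I)"

definition left_ideal :: "'a::ring_1 set \<Rightarrow> bool" where
  "left_ideal I \<longleftrightarrow> 0 \<in> I \<and> (\<forall>x\<in>I. \<forall>y\<in>I. x + y \<in> I) \<and> (\<forall>x\<in>I. - x \<in> I)
     \<and> (\<forall>r x. x \<in> I \<longrightarrow> r * x \<in> I)"

definition maximal_ideal :: "'a::ring_1 set \<Rightarrow> bool" where
  "maximal_ideal M \<longleftrightarrow> tideal M \<and> M \<noteq> UNIV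
     \<and> (\<forall>I. tideal I \<and> M \<subseteq> I \<longrightarrow> I = M \<or> I = UNIV)"

definition maximal_left_ideal :: "'a::ring_1 set \<Rightarrow> bool" where
  "maximal_left_ideal M \<longleftrightarrow> left_ideal M \<and> M \<noteq> UNIV
     \<and> (\<forall>I. left_ideal I \<and> M \<subseteq> I \<longrightarrow> I = M \<or> I = UNIV)"

definition jacobson :: "'a::ring_1 set" where
  "jacobson = \<Inter>{M. maximal_left_ideal M}"

text \<open>Two-sided ideal generated by a set; R u R is ideal_span {u}.\<close>
definition ideal_span :: "'a::ring_1 set \<Rightarrow> 'a set" where
  "ideal_span S = \<Inter>{I. tideal I \<and> S \<subseteq> I}"

definition full :: "'a::ring_1 \<Rightarrow> bool" where
  "full u \<longleftrightarrow> ideal_span {u} = UNIV"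

definition feckly_clean_elem :: "'a::ring_1 \<Rightarrow> bool" where
  "feckly_clean_elem a \<longleftrightarrow> (\<exists>e u. a = e + u \<and> full u
      \<and> (\<forall>r. e * r * (1 - e) \<in> (jacobson :: 'a set)))"

definition feckly_clean :: "'a::ring_1 itself \<Rightarrow> bool" where
  "feckly_clean _ \<longleftrightarrow> (\<forall>a::'a. feckly_clean_elem a)"

definition MaxR :: "'a::ring_1 set set" where
  "MaxR = {M. maximal_ideal M}"

definition VMax :: "'a::ring_1 set \<Rightarrow> 'a set set" where
  "VMax I = {P \<in> MaxR. I \<subseteq> P}"

definition closedMax :: "'a::ring_1 set set \<Rightarrow> bool" where
  "closedMax A \<longleftrightarrow> (\<exists>I. tideal I \<and> A = VMax I)"

definition clopenMax :: "'a::ring_1 set set \<Rightarrow> bool" where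
  "clopenMax C \<longleftrightarrow> closedMax C \<and> closedMax (MaxR - C)"

definition Max_strongly_zero_dim :: "'a::ring_1 itself \<Rightarrow> bool" where
  "Max_strongly_zero_dim _ \<longleftrightarrow>
     (\<forall>A B :: 'a set set. closedMax A \<and> closedMax B \<and> A \<inter> B = {} \<longrightarrow>
        (\<exists>C1 C2. clopenMax C1 \<and> clopenMax C2 \<and> C1 \<inter> C2 = {} \<and> A \<subseteq> C1 \<and> B \<subseteq> C2))"

end

theory Submission
  imports Defs
begin

lemma tidealI:
  assumes "0 \<in> I" "\<And>x y. x\<in>I \<Longrightarrow> y\<in>I \<Longrightarrow> x+y\<in>I" "\<And>x. x\<in>I \<Longrightarrow> -x\<in>I"
    "\<And>r x. x\<in>I \<Longrightarrow> r*x\<in>I" "\<And>r x. x\<in>I \<Longrightarrow> x*r\<in>I"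
  shows "tideal I"
  using assms unfolding tideal_def by blast

lemma tideal_0: "tideal I \<Longrightarrow> 0 \<in> I" unfolding tideal_def by blast
lemma tideal_add: "tideal I \<Longrightarrow> x\<in>I \<Longrightarrow> y\<in>I \<Longrightarrow> x+y \<in> I" unfolding tideal_def by blast
lemma tideal_neg: "tideal I \<Longrightarrow> x\<in>I \<Longrightarrow> -x \<in> I" unfolding tideal_def by blast
lemma tideal_lmult: "tideal I \<Longrightarrow> x\<in>I \<Longrightarrow> r*x \<in> I" unfolding tideal_def by blast
lemma tideal_rmult: "tideal I \<Longrightarrow> x\<in>I \<Longrightarrow> x*r \<in> I" unfolding tideal_def by blast
lemma tideal_diff: "tideal I \<Longrightarrow> x\<in>I \<Longrightarrow> y\<in>I \<Longrightarrow> x-y \<in> I"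
  using tideal_add[of I x "-y"] tideal_neg[of I y] by simp
lemma tideal_one: "tideal I \<Longrightarrow> 1 \<in> I \<Longrightarrow> I = UNIV"
  using tideal_lmult[of I 1] by force

lemma left_idealI:
  assumes "0 \<in> I" "\<And>x y. x\<in>I \<Longrightarrow> y\<in>I \<Longrightarrow> x+y\<in>I" "\<And>x. x\<in>I \<Longrightarrow> -x\<in>I"
    "\<And>r x. x\<in>I \<Longrightarrow> r*x\<in>I"
  shows "left_ideal I"
  using assms unfolding left_ideal_def by blast
lemma left_ideal_0: "left_ideal I \<Longrightarrow> 0 \<in> I" unfolding left_ideal_def by blast
lemma left_ideal_add: "left_ideal I \<Longrightarrow> x\<in>I \<Longrightarrow> y\<in>I \<Longrightarrow> x+y \<in> I" unfolding left_ideal_def by blast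
lemma left_ideal_neg: "left_ideal I \<Longrightarrow> x\<in>I \<Longrightarrow> -x \<in> I" unfolding left_ideal_def by blast
lemma left_ideal_lmult: "left_ideal I \<Longrightarrow> x\<in>I \<Longrightarrow> r*x \<in> I" unfolding left_ideal_def by blast
lemma left_ideal_one: "left_ideal I \<Longrightarrow> 1 \<in> I \<Longrightarrow> I = UNIV"
  using left_ideal_lmult[of I 1] by force
lemma tideal_left: "tideal I \<Longrightarrow> left_ideal I"
  unfolding tideal_def left_ideal_def by blast

lemma zorn_gen:
  fixes I :: "'a::ring_1 set"
  assumes "Q I" "1 \<notin> I"
    and ch: "\<And>C. C \<noteq> {} \<Longrightarrow> (\<forall>X\<in>C. Q X) \<Longrightarrow> (\<forall>X\<in>C. \<forall>Y\<in>C. X\<subseteq>Y \<or> Y\<subseteq>X) \<Longrightarrow> Q (\<Union>C)"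
  shows "\<exists>M. Q M \<and> I \<subseteq> M \<and> 1 \<notin> M \<and> (\<forall>X. Q X \<and> M \<subseteq> X \<and> 1 \<notin> X \<longrightarrow> X = M)"
proof -
  let ?A = "{J::'a set. Q J \<and> I \<subseteq> J \<and> 1 \<notin> J}"
  have "\<exists>U\<in>?A. \<forall>X\<in>C. X \<subseteq> U" if "C \<in> chains ?A" for C
  proof (cases "C = {}")
    case True thus ?thesis using assms by blast
  next
    case False
    have CA: "C \<subseteq> ?A" using that unfolding chains_def by blast
    have cc: "\<forall>X\<in>C. \<forall>Y\<in>C. X \<subseteq> Y \<or> Y \<subseteq> X" using that unfolding chains_def chain_subset_def by blast
    have "Q (\<Union>C)" using ch[OF False] CA cc by blast
    moreover have "I \<subseteq> \<Union>C" using False CA by blast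
    moreover have "1 \<notin> \<Union>C" using CA by blast
    ultimately show ?thesis by blast
  qed
  then obtain M where "M \<in> ?A" "\<forall>X\<in>?A. M \<subseteq> X \<longrightarrow> X = M"
    using Zorn_Lemma2[of ?A] by blast
  then show ?thesis by blast
qed

lemma left_chain:
  fixes C :: "'a::ring_1 set set"
  assumes "C \<noteq> {}" "\<forall>X\<in>C. left_ideal X" "\<forall>X\<in>C. \<forall>Y\<in>C. X\<subseteq>Y \<or> Y\<subseteq>X"
  shows "left_ideal (\<Union>C)"
proof (rule left_idealI)
  show "0 \<in> \<Union>C" using assms left_ideal_0 by blast
  fix x y assume "x \<in> \<Union>C" "y \<in> \<Union>C"
  then obtain X Y where XY: "X\<in>C" "Y\<in>C" "x\<in>X" "y\<in>Y" by blast
  with assms(3) have "x\<in>X\<and>y\<in>X \<or> x\<in>Y\<and>y\<in>Y" by blast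
  then show "x+y \<in> \<Union>C" using XY assms(2) left_ideal_add by blast
next
  fix x assume "x \<in> \<Union>C" then show "-x \<in> \<Union>C" using assms(2) left_ideal_neg by blast
next
  fix r x assume "x \<in> \<Union>C" then show "r*x \<in> \<Union>C" using assms(2) left_ideal_lmult by blast
qed

lemma t_chain:
  fixes C :: "'a::ring_1 set set"
  assumes "C \<noteq> {}" "\<forall>X\<in>C. tideal X" "\<forall>X\<in>C. \<forall>Y\<in>C. X\<subseteq>Y \<or> Y\<subseteq>X"
  shows "tideal (\<Union>C)"
proof (rule tidealI)
  show "0 \<in> \<Union>C" using assms tideal_0 by blast
  fix x y assume "x \<in> \<Union>C" "y \<in> \<Union>C"
  then obtain X Y where XY: "X\<in>C" "Y\<in>C" "x\<in>X" "y\<in>Y" by blast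
  with assms(3) have "x\<in>X\<and>y\<in>X \<or> x\<in>Y\<and>y\<in>Y" by blast
  then show "x+y \<in> \<Union>C" using XY assms(2) tideal_add by blast
next
  fix x assume "x \<in> \<Union>C" then show "-x \<in> \<Union>C" using assms(2) tideal_neg by blast
next
  fix r x assume "x \<in> \<Union>C" then show "r*x \<in> \<Union>C" using assms(2) tideal_lmult by blast
next
  fix r x assume "x \<in> \<Union>C" then show "x*r \<in> \<Union>C" using assms(2) tideal_rmult by blast
qed

lemma max_left_exists:
  fixes I :: "'a::ring_1 set"
  assumes "left_ideal I" "1 \<notin> I"
  shows "\<exists>L. maximal_left_ideal L \<and> I \<subseteq> L"
proof -
  obtain M where M: "left_ideal M" "I \<subseteq> M" "1 \<notin> M"
    "\<forall>X. left_ideal X \<and> M \<subseteq> X \<and> 1 \<notin> X \<longrightarrow> X = M"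
    using zorn_gen[of left_ideal I, OF assms left_chain] by blast
  have "maximal_left_ideal M"
    unfolding maximal_left_ideal_def
  proof (intro conjI allI impI)
    show "left_ideal M" by fact
    show "M \<noteq> UNIV" using M by blast
    fix X assume "left_ideal X \<and> M \<subseteq> X"
    then show "X = M \<or> X = UNIV" using M left_ideal_one by blast
  qed
  then show ?thesis using M by blast
qed

lemma max_exists:
  fixes I :: "'a::ring_1 set"
  assumes "tideal I" "1 \<notin> I"
  shows "\<exists>M. maximal_ideal M \<and> I \<subseteq> M"
proof -
  obtain M where M: "tideal M" "I \<subseteq> M" "1 \<notin> M"
    "\<forall>X. tideal X \<and> M \<subseteq> X \<and> 1 \<notin> X \<longrightarrow> X = M"
    using zorn_gen[of tideal I, OF assms t_chain] by blast
  have "maximal_ideal M"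
    unfolding maximal_ideal_def
  proof (intro conjI allI impI)
    show "tideal M" by fact
    show "M \<noteq> UNIV" using M by blast
    fix X assume "tideal X \<and> M \<subseteq> X"
    then show "X = M \<or> X = UNIV" using M tideal_one by blast
  qed
  then show ?thesis using M by blast
qed

lemma maxD: "maximal_ideal M \<Longrightarrow> tideal M" "maximal_ideal M \<Longrightarrow> (1::'a::ring_1) \<notin> M"
  unfolding maximal_ideal_def using tideal_one by blast+

lemma max_prime:
  fixes M :: "'a::ring_1 set"
  assumes "maximal_ideal M" "\<forall>r. a*r*b \<in> M"
  shows "a \<in> M \<or> b \<in> M"
proof -
  let ?A = "{x. \<forall>r. x*r*b \<in> M}"
  have tM: "tideal M" using assms maxD by blast
  have "tideal ?A"
  proof (rule tidealI)
    show "0 \<in> ?A" using tideal_0[OF tM] by simp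
    fix x y assume "x \<in> ?A" "y \<in> ?A" then show "x+y \<in> ?A"
      using tideal_add[OF tM] by (simp add: distrib_right)
  next
    fix x assume "x \<in> ?A" then show "-x \<in> ?A" using tideal_neg[OF tM] by simp
  next
    fix r x assume "x \<in> ?A" then show "r*x \<in> ?A" using tideal_lmult[OF tM]
      by (simp add: mult.assoc)
  next
    fix r x assume "x \<in> ?A" then show "x*r \<in> ?A"
    proof (clarsimp)
      fix s assume "\<forall>r. x*r*b \<in> M"
      then have "x*(r*s)*b \<in> M" by blast
      then show "x*r*s*b \<in> M" by (simp add: mult.assoc)
    qed
  qed
  moreover have "M \<subseteq> ?A" using tideal_rmult[OF tM] by blast
  ultimately have "?A = M \<or> ?A = UNIV" using assms(1) unfolding maximal_ideal_def by blast
  then show ?thesis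
  proof
    assume "?A = M" then show ?thesis using assms(2) by blast
  next
    assume "?A = UNIV" then have "1*1*b \<in> M" by blast
    then show ?thesis by simp
  qed
qed


lemma jac_mem: "x \<in> jacobson \<Longrightarrow> maximal_left_ideal L \<Longrightarrow> x \<in> L"
  unfolding jacobson_def by blast
lemma jac_memI: "(\<And>L. maximal_left_ideal L \<Longrightarrow> x \<in> L) \<Longrightarrow> x \<in> jacobson"
  unfolding jacobson_def by blast
lemma mlD: "maximal_left_ideal L \<Longrightarrow> left_ideal L" "maximal_left_ideal L \<Longrightarrow> (1::'a::ring_1) \<notin> L"
  unfolding maximal_left_ideal_def using left_ideal_one by blast+

lemma jac_0: "0 \<in> jacobson" by (rule jac_memI) (simp add: mlD left_ideal_0)
lemma jac_add: "x \<in> jacobson \<Longrightarrow> y \<in> jacobson \<Longrightarrow> x + y \<in> jacobson"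
  by (rule jac_memI) (simp add: mlD left_ideal_add jac_mem)
lemma jac_neg: "x \<in> jacobson \<Longrightarrow> - x \<in> jacobson"
  by (rule jac_memI) (simp add: mlD left_ideal_neg jac_mem)
lemma jac_lmult: "x \<in> jacobson \<Longrightarrow> r * x \<in> jacobson"
  by (rule jac_memI) (simp add: mlD left_ideal_lmult jac_mem)

lemma jac_inv:
  fixes x :: "'a::ring_1"
  assumes "x \<in> jacobson"
  shows "\<exists>v. v*(1 - r*x) = 1"
proof (rule ccontr)
  assume na: "\<nexists>v. v*(1 - r*x) = 1"
  let ?L = "{y*(1 - r*x) | y. True}"
  have "left_ideal ?L"
  proof (rule left_idealI)
    show "0 \<in> ?L" by (metis (mono_tags) mult_zero_left mem_Collect_eq)
    fix a b assume "a \<in> ?L" "b \<in> ?L" then show "a+b \<in> ?L"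
      by (auto simp: distrib_right[symmetric])
  next
    fix a assume "a \<in> ?L" then show "-a \<in> ?L"
      by (auto) (metis minus_mult_left)
  next
    fix t a assume "a \<in> ?L" then show "t*a \<in> ?L"
      by (auto) (metis mult.assoc)
  qed
  moreover have "1 \<notin> ?L" using na by auto
  ultimately obtain L where L: "maximal_left_ideal L" "?L \<subseteq> L"
    using max_left_exists by blast
  have "1*(1 - r*x) \<in> ?L" by blast
  then have "1 - r*x \<in> L" using L by auto
  moreover have "r*x \<in> L" using jac_mem[OF assms L(1)] mlD(1)[OF L(1)] left_ideal_lmult by blast
  ultimately have "(1 - r*x) + r*x \<in> L" using mlD(1)[OF L(1)] left_ideal_add by blast
  then show False using mlD(2)[OF L(1)] by simp
qed

lemma left_inv_swap:
  fixes a b v :: "'a::ring_1"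
  assumes "v*(1 - a*b) = 1"
  shows "(1 + b*v*a)*(1 - b*a) = 1"
proof -
  have "(1 + b*v*a)*(1 - b*a) = 1 - b*a + b*(v*(1 - a*b))*a"
    by (simp add: algebra_simps)
  then show ?thesis using assms by simp
qed

lemma jac_rmult:
  fixes x :: "'a::ring_1"
  assumes "x \<in> jacobson"
  shows "x * s \<in> jacobson"
proof (rule jac_memI, rule ccontr)
  fix L :: "'a set" assume L: "maximal_left_ideal L" and nx: "x*s \<notin> L"
  have lL: "left_ideal L" using mlD L by blast
  let ?L' = "{l + t*(x*s) | l t. l \<in> L}"
  have "left_ideal ?L'"
  proof (rule left_idealI)
    have "(0::'a) = 0 + 0*(x*s)" by simp
    then show "0 \<in> ?L'" using left_ideal_0[OF lL] by blast
    fix a b assume "a \<in> ?L'" "b \<in> ?L'"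
    then obtain l1 t1 l2 t2 where "a = l1 + t1*(x*s)" "b = l2 + t2*(x*s)" "l1 \<in> L" "l2 \<in> L" by blast
    then have "a + b = (l1 + l2) + (t1+t2)*(x*s)" "l1+l2 \<in> L"
      using left_ideal_add[OF lL] by (auto simp: algebra_simps)
    then show "a+b \<in> ?L'" by blast
  next
    fix a assume "a \<in> ?L'"
    then obtain l t where "a = l + t*(x*s)" "l \<in> L" by blast
    then have "-a = (-l) + (-t)*(x*s)" "-l \<in> L" using left_ideal_neg[OF lL] by auto
    then show "-a \<in> ?L'" by blast
  next
    fix r a assume "a \<in> ?L'"
    then obtain l t where "a = l + t*(x*s)" "l \<in> L" by blast
    then have "r*a = r*l + (r*t)*(x*s)" "r*l \<in> L" using left_ideal_lmult[OF lL]
      by (auto simp: algebra_simps)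
    then show "r*a \<in> ?L'" by blast
  qed
  moreover have "L \<subseteq> ?L'"
  proof
    fix l assume "l \<in> L"
    moreover have "l = l + 0*(x*s)" by simp
    ultimately show "l \<in> ?L'" by blast
  qed
  moreover have "x*s \<in> ?L'"
  proof -
    have "x*s = 0 + 1*(x*s)" by simp
    then show ?thesis using left_ideal_0[OF lL] by blast
  qed
  ultimately have "?L' = UNIV" using L nx unfolding maximal_left_ideal_def by blast
  then have "1 \<in> ?L'" by simp
  then obtain l t where lt: "1 = l + t*(x*s)" "l \<in> L" by blast
  obtain v where "v*(1 - (s*t)*x) = 1" using jac_inv[OF assms] by blast
  then have "v*(1 - s*(t*x)) = 1" by (simp add: mult.assoc)
  then have "(1 + (t*x)*v*s)*(1 - (t*x)*s) = 1" by (rule left_inv_swap)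
  moreover have "1 - (t*x)*s = l" using lt by (simp add: algebra_simps)
  ultimately have "(1 + (t*x)*v*s)*l = 1" by simp
  then have "1 \<in> L" using left_ideal_lmult[OF lL lt(2)] by metis
  then show False using mlD L by blast
qed

lemma jac_tideal: "tideal (jacobson :: 'a::ring_1 set)"
  by (rule tidealI) (auto simp: jac_0 jac_add jac_neg jac_lmult jac_rmult)

lemma jac_sub_max:
  fixes M :: "'a::ring_1 set"
  assumes "maximal_ideal M"
  shows "jacobson \<subseteq> M"
proof
  have tM: "tideal M" using assms maxD by blast
  obtain L where L: "maximal_left_ideal L" "M \<subseteq> L"
    using max_left_exists[OF tideal_left[OF tM]] maxD(2)[OF assms] by blast
  have lL: "left_ideal L" using mlD L by blast
  let ?P = "{r. \<forall>s. r*s \<in> L}"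
  have "tideal ?P"
  proof (rule tidealI)
    show "0 \<in> ?P" using left_ideal_0[OF lL] by simp
    fix a b assume "a \<in> ?P" "b \<in> ?P" then show "a+b \<in> ?P"
      using left_ideal_add[OF lL] by (simp add: distrib_right)
  next
    fix a assume "a \<in> ?P" then show "-a \<in> ?P" using left_ideal_neg[OF lL] by simp
  next
    fix r a assume "a \<in> ?P" then show "r*a \<in> ?P" using left_ideal_lmult[OF lL]
      by (simp add: mult.assoc)
  next
    fix r a assume "a \<in> ?P" then show "a*r \<in> ?P" by (simp add: mult.assoc)
  qed
  moreover have "M \<subseteq> ?P" using L(2) tideal_rmult[OF tM] by blast
  ultimately have "?P = M \<or> ?P = UNIV" using assms unfolding maximal_ideal_def by blast
  moreover have "1 \<notin> ?P" using mlD(2)[OF L(1)] by auto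
  ultimately have PM: "?P = M" by blast
  fix x assume "x \<in> (jacobson :: 'a set)"
  then have "x \<in> ?P" using jac_rmult jac_mem[OF _ L(1)] by blast
  then show "x \<in> M" using PM by blast
qed

lemma ideal_span_tideal: "tideal (ideal_span S)"
  unfolding ideal_span_def by (rule tidealI) (auto simp: tideal_0 tideal_add tideal_neg tideal_lmult tideal_rmult)
lemma ideal_span_sub: "S \<subseteq> ideal_span S" unfolding ideal_span_def by blast
lemma ideal_span_least: "tideal I \<Longrightarrow> S \<subseteq> I \<Longrightarrow> ideal_span S \<subseteq> I" unfolding ideal_span_def by blast

lemma VMax_span1: "VMax (ideal_span {a}) = {M \<in> MaxR. a \<in> M}"
  unfolding VMax_def MaxR_def using ideal_span_sub ideal_span_least maxD(1) by blast

lemma closed_span1: "closedMax {M \<in> MaxR. a \<in> M}"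
  unfolding closedMax_def using VMax_span1 ideal_span_tideal by metis

lemma full_iff: "full (u::'a::ring_1) \<longleftrightarrow> (\<forall>M. maximal_ideal M \<longrightarrow> u \<notin> M)"
proof
  assume f: "full u"
  show "\<forall>M. maximal_ideal M \<longrightarrow> u \<notin> M"
  proof (intro allI impI notI)
    fix M assume "maximal_ideal M" "u \<in> M"
    then have "ideal_span {u} \<subseteq> M" using ideal_span_least maxD by blast
    then show False using f \<open>maximal_ideal M\<close> maxD(2) unfolding full_def by blast
  qed
next
  assume h: "\<forall>M. maximal_ideal M \<longrightarrow> u \<notin> M"
  show "full u" unfolding full_def
  proof (rule ccontr)
    assume "ideal_span {u} \<noteq> UNIV"
    then have "1 \<notin> ideal_span {u}" using tideal_one ideal_span_tideal by blast
    then obtain M where "maximal_ideal M" "ideal_span {u} \<subseteq> M"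
      using max_exists ideal_span_tideal by blast
    then show False using h ideal_span_sub by blast
  qed
qed

lemma comax:
  fixes I K :: "'a::ring_1 set"
  assumes "tideal I" "tideal K" "\<And>M. maximal_ideal M \<Longrightarrow> I \<subseteq> M \<Longrightarrow> K \<subseteq> M \<Longrightarrow> False"
  shows "\<exists>x\<in>I. \<exists>y\<in>K. x + y = 1"
proof (rule ccontr)
  assume na: "\<not> ?thesis"
  let ?S = "{x + y | x y. x \<in> I \<and> y \<in> K}"
  have "tideal ?S"
  proof (rule tidealI)
    have "(0::'a) = 0 + 0" by simp
    then show "0 \<in> ?S" using assms tideal_0 by blast
    fix a b assume "a \<in> ?S" "b \<in> ?S"
    then obtain x1 y1 x2 y2 where "a = x1 + y1" "b = x2 + y2" "x1 \<in> I" "x2 \<in> I" "y1 \<in> K" "y2 \<in> K" by blast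
    then have "a + b = (x1+x2) + (y1+y2)" "x1+x2 \<in> I" "y1+y2 \<in> K"
      using assms tideal_add by (auto simp: algebra_simps)
    then show "a+b \<in> ?S" by blast
  next
    fix a assume "a \<in> ?S"
    then obtain x y where "a = x + y" "x \<in> I" "y \<in> K" by blast
    then have "-a = (-x) + (-y)" "-x \<in> I" "-y \<in> K" using assms tideal_neg by auto
    then show "-a \<in> ?S" by blast
  next
    fix r a assume "a \<in> ?S"
    then obtain x y where "a = x + y" "x \<in> I" "y \<in> K" by blast
    then have "r*a = r*x + r*y" "r*x \<in> I" "r*y \<in> K" using assms tideal_lmult by (auto simp: algebra_simps)
    then show "r*a \<in> ?S" by blast
  next
    fix r a assume "a \<in> ?S"
    then obtain x y where "a = x + y" "x \<in> I" "y \<in> K" by blast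
    then have "a*r = x*r + y*r" "x*r \<in> I" "y*r \<in> K" using assms tideal_rmult by (auto simp: algebra_simps)
    then show "a*r \<in> ?S" by blast
  qed
  moreover have "1 \<notin> ?S"
  proof
    assume "1 \<in> ?S"
    then obtain x y where "1 = x + y" "x \<in> I" "y \<in> K" by blast
    then show False using na by metis
  qed
  ultimately obtain M where M: "maximal_ideal M" "?S \<subseteq> M" using max_exists by blast
  have IS: "I \<subseteq> ?S"
  proof
    fix x assume "x \<in> I"
    moreover have "x = x + 0" by simp
    ultimately show "x \<in> ?S" using assms tideal_0 by blast
  qed
  have KS: "K \<subseteq> ?S"
  proof
    fix x assume "x \<in> K"
    moreover have "x = 0 + x" by simp
    ultimately show "x \<in> ?S" using assms tideal_0 by blast
  qed
  have "I \<subseteq> M" using IS M(2) by (rule subset_trans)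
  moreover have "K \<subseteq> M" using KS M(2) by (rule subset_trans)
  ultimately show False using assms(3) M(1) by blast
qed

lemma dich:
  fixes e :: "'a::ring_1"
  assumes "maximal_ideal M" "\<forall>r. e*r*(1-e) \<in> jacobson"
  shows "e \<in> M \<or> 1 - e \<in> M" "\<not> (e \<in> M \<and> 1 - e \<in> M)"
proof -
  have "\<forall>r. e*r*(1-e) \<in> M"
  proof
    fix r show "e*r*(1-e) \<in> M" using assms(2) jac_sub_max[OF assms(1)] by (meson subsetD)
  qed
  then show "e \<in> M \<or> 1 - e \<in> M" by (rule max_prime[OF assms(1)])
  show "\<not> (e \<in> M \<and> 1 - e \<in> M)"
  proof
    assume a: "e \<in> M \<and> 1 - e \<in> M"
    have "e + (1 - e) \<in> M" using tideal_add[OF maxD(1)[OF assms(1)]] a by blast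
    then show False using maxD(2)[OF assms(1)] by simp
  qed
qed


lemma maxmax:
  fixes M P :: "'a::ring_1 set"
  assumes "maximal_ideal M" "maximal_ideal P" "M \<subseteq> P"
  shows "P = M"
proof -
  have "P = M \<or> P = UNIV" using assms(1,3) maxD(1)[OF assms(2)] unfolding maximal_ideal_def by blast
  moreover have "P \<noteq> UNIV" using maxD(2)[OF assms(2)] by blast
  ultimately show ?thesis by blast
qed

lemma one_notin: "maximal_ideal M \<Longrightarrow> x \<in> M \<Longrightarrow> y \<in> M \<Longrightarrow> x + y = (1::'a::ring_1) \<Longrightarrow> False"
  using tideal_add[OF maxD(1), of M x y] maxD(2)[of M] by simp

lemma fc_cond2:
  fixes M N :: "'a::ring_1 set"
  assumes fc: "feckly_clean TYPE('a)" and M: "maximal_ideal M" and N: "maximal_ideal N" and ne: "M \<noteq> N"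
  shows "\<exists>a b. a \<notin> M \<and> b \<notin> N \<and> (\<forall>r. a*r*b \<in> (jacobson::'a set))"
proof -
  have "\<exists>x\<in>M. \<exists>y\<in>N. x + y = 1"
  proof (rule comax[OF maxD(1)[OF M] maxD(1)[OF N]])
    fix P assume P: "maximal_ideal P" "M \<subseteq> P" "N \<subseteq> P"
    have "P = M" using maxmax[OF M P(1,2)] .
    moreover have "P = N" using maxmax[OF N P(1,3)] .
    ultimately show False using ne by simp
  qed
  then obtain m n where mn: "m \<in> M" "n \<in> N" "m + n = 1" by blast
  have "feckly_clean_elem m" using fc unfolding feckly_clean_def by blast
  then obtain e u where eu: "m = e + u" "full u" "\<forall>r. e*r*(1-e) \<in> (jacobson::'a set)"
    unfolding feckly_clean_elem_def by blast
  have uM: "u \<notin> M" "u \<notin> N" using eu(2) full_iff M N by blast+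
  have "e \<notin> M"
  proof
    assume "e \<in> M"
    then have "m - e \<in> M" using tideal_diff[OF maxD(1)[OF M] mn(1)] by blast
    then show False using uM eu(1) by simp
  qed
  moreover have "1 - e \<notin> N"
  proof
    assume "1 - e \<in> N"
    then have "(1 - e) - n \<in> N" using tideal_diff[OF maxD(1)[OF N] _ mn(2)] by blast
    moreover have "(1 - e) - n = u" using eu(1) mn(3) by (simp add: algebra_simps)
    ultimately show False using uM by simp
  qed
  ultimately show ?thesis using eu(3) by blast
qed

lemma fc_szd:
  assumes fc: "feckly_clean TYPE('a::ring_1)"
  shows "Max_strongly_zero_dim TYPE('a)"
  unfolding Max_strongly_zero_dim_def
proof (intro allI impI)
  fix A B :: "'a set set" assume h: "closedMax A \<and> closedMax B \<and> A \<inter> B = {}"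
  obtain I where I: "tideal I" "A = VMax I" using h unfolding closedMax_def by blast
  obtain K where K: "tideal K" "B = VMax K" using h unfolding closedMax_def by blast
  have "\<exists>i\<in>I. \<exists>k\<in>K. i + k = 1"
  proof (rule comax[OF I(1) K(1)])
    fix P assume P: "maximal_ideal P" "I \<subseteq> P" "K \<subseteq> P"
    then have "P \<in> A" "P \<in> B" unfolding I(2) K(2) VMax_def MaxR_def by blast+
    then show False using h by blast
  qed
  then obtain i k where ik: "i \<in> I" "k \<in> K" "i + k = 1" by blast
  have "feckly_clean_elem i" using fc unfolding feckly_clean_def by blast
  then obtain e u where eu: "i = e + u" "full u" "\<forall>r. e*r*(1-e) \<in> (jacobson::'a set)"
    unfolding feckly_clean_elem_def by blast
  let ?C1 = "{M \<in> MaxR. 1 - e \<in> M}" and ?C2 = "{M \<in> MaxR. e \<in> M}"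
  have d1: "\<And>M. M \<in> MaxR \<Longrightarrow> e \<in> M \<or> 1 - e \<in> M" using dich(1) eu(3) unfolding MaxR_def by blast
  have d2: "\<And>M. M \<in> MaxR \<Longrightarrow> \<not> (e \<in> M \<and> 1 - e \<in> M)" using dich(2) eu(3) unfolding MaxR_def by blast
  have c1: "MaxR - ?C1 = ?C2" using d1 d2 by blast
  have c2: "MaxR - ?C2 = ?C1" using d1 d2 by blast
  have "clopenMax ?C1" unfolding clopenMax_def using c1 closed_span1 by metis
  moreover have "clopenMax ?C2" unfolding clopenMax_def using c2 closed_span1 by metis
  moreover have "?C1 \<inter> ?C2 = {}" using d2 by blast
  moreover have "A \<subseteq> ?C1"
  proof
    fix M assume "M \<in> A"
    then have M: "maximal_ideal M" "I \<subseteq> M" "M \<in> MaxR" unfolding I(2) VMax_def MaxR_def by blast+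
    have "e \<notin> M"
    proof
      assume "e \<in> M"
      then have "i - e \<in> M" using tideal_diff[OF maxD(1)[OF M(1)]] ik(1) M(2) by blast
      then have "u \<in> M" using eu(1) by simp
      then show False using eu(2) full_iff M(1) by blast
    qed
    then show "M \<in> ?C1" using d1 M(3) by blast
  qed
  moreover have "B \<subseteq> ?C2"
  proof
    fix M assume "M \<in> B"
    then have M: "maximal_ideal M" "K \<subseteq> M" "M \<in> MaxR" unfolding K(2) VMax_def MaxR_def by blast+
    have "1 - e \<notin> M"
    proof
      assume "1 - e \<in> M"
      then have "(1 - e) - k \<in> M" using tideal_diff[OF maxD(1)[OF M(1)]] ik(2) M(2) by blast
      moreover have "(1 - e) - k = u" using eu(1) ik(3) by (simp add: algebra_simps)
      ultimately show False using eu(2) full_iff M(1) by blast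
    qed
    then show "M \<in> ?C2" using d1 M(3) by blast
  qed
  ultimately show "\<exists>C1 C2. clopenMax C1 \<and> clopenMax C2 \<and> C1 \<inter> C2 = {} \<and> A \<subseteq> C1 \<and> B \<subseteq> C2"
    by blast
qed


lemma conv:
  fixes a :: "'a::ring_1"
  assumes szd: "Max_strongly_zero_dim TYPE('a)"
  and c2: "\<forall>M N :: 'a set. maximal_ideal M \<and> maximal_ideal N \<and> M \<noteq> N \<longrightarrow>
        (\<exists>a b. a \<notin> M \<and> b \<notin> N \<and> (\<forall>r. a * r * b \<in> (jacobson :: 'a set)))"
  shows "feckly_clean_elem a"
proof -
  let ?A0 = "{M \<in> MaxR. a \<in> M}" and ?B0 = "{M \<in> MaxR. 1 - a \<in> M}"
  have disj: "?A0 \<inter> ?B0 = {}"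
  proof (rule ccontr)
    assume "?A0 \<inter> ?B0 \<noteq> {}"
    then obtain M where "maximal_ideal M" "a \<in> M" "1 - a \<in> M" unfolding MaxR_def by blast
    then show False using one_notin[of M a "1 - a"] by simp
  qed
  have "closedMax ?A0" "closedMax ?B0" by (rule closed_span1)+
  then obtain C1 C2 where C: "clopenMax C1" "clopenMax C2" "C1 \<inter> C2 = {}" "?A0 \<subseteq> C1" "?B0 \<subseteq> C2"
    using szd disj unfolding Max_strongly_zero_dim_def by blast
  obtain I where I: "tideal I" "C1 = VMax I" using C(1) unfolding clopenMax_def closedMax_def by blast
  obtain K where K: "tideal K" "MaxR - C1 = VMax K" using C(1) unfolding clopenMax_def closedMax_def by blast
  have F1: "\<And>M. maximal_ideal M \<Longrightarrow> a \<in> M \<Longrightarrow> M \<in> C1" using C(4) unfolding MaxR_def by blast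
  have F2: "\<And>M. M \<in> C1 \<Longrightarrow> 1 - a \<notin> M"
  proof
    fix M assume "M \<in> C1" "1 - a \<in> M"
    moreover have "M \<in> MaxR" using \<open>M \<in> C1\<close> I(2) unfolding VMax_def by blast
    ultimately show False using C(3,5) by blast
  qed
  have F3: "\<And>M. maximal_ideal M \<Longrightarrow> M \<in> C1 \<longleftrightarrow> I \<subseteq> M" using I(2) unfolding VMax_def MaxR_def by blast
  have F4: "\<And>M. maximal_ideal M \<Longrightarrow> M \<notin> C1 \<longleftrightarrow> K \<subseteq> M"
  proof -
    fix M :: "'a set" assume "maximal_ideal M"
    then have "M \<in> MaxR" unfolding MaxR_def by blast
    then have "M \<notin> C1 \<longleftrightarrow> M \<in> VMax K" using K(2) by blast
    also have "\<dots> \<longleftrightarrow> K \<subseteq> M" using \<open>M \<in> MaxR\<close> unfolding VMax_def by blast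
    finally show "M \<notin> C1 \<longleftrightarrow> K \<subseteq> M" .
  qed
  define W where "W = {b. \<exists>i\<in>I. \<forall>r. (1 - i)*r*b \<in> (jacobson::'a set)}"
  have tW: "tideal W"
  proof (rule tidealI)
    have "\<forall>r. (1 - 0)*r*0 \<in> (jacobson::'a set)" using jac_0 by simp
    then show "0 \<in> W" unfolding W_def using tideal_0[OF I(1)] by blast
  next
    fix b1 b2 assume "b1 \<in> W" "b2 \<in> W"
    then obtain i1 i2 where i: "i1 \<in> I" "\<forall>r. (1 - i1)*r*b1 \<in> (jacobson::'a set)"
      "i2 \<in> I" "\<forall>r. (1 - i2)*r*b2 \<in> (jacobson::'a set)" unfolding W_def by blast
    define i where "i = i1 + i2 - i1*i2"
    have iI: "i \<in> I" unfolding i_def using i(1,3) tideal_add[OF I(1)] tideal_diff[OF I(1)] tideal_rmult[OF I(1)] by blast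
    have "\<forall>r. (1 - i)*r*(b1+b2) \<in> (jacobson::'a set)"
    proof
      fix r
      have eq: "(1 - i)*r*(b1+b2) = (1-i1)*((1-i2)*r)*b1 + (1-i1)*((1-i2)*r*b2)"
        unfolding i_def by (simp add: algebra_simps)
      show "(1 - i)*r*(b1+b2) \<in> jacobson" unfolding eq
        using i(2,4) jac_add jac_lmult by blast
    qed
    then show "b1 + b2 \<in> W" unfolding W_def using iI by blast
  next
    fix b assume "b \<in> W"
    then obtain i where i: "i \<in> I" "\<forall>r. (1 - i)*r*b \<in> (jacobson::'a set)" unfolding W_def by blast
    then have "\<forall>r. (1 - i)*r*(-b) \<in> (jacobson::'a set)" by (auto intro: jac_neg)
    then show "-b \<in> W" unfolding W_def using i(1) by blast
  next
    fix t b assume "b \<in> W"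
    then obtain i where i: "i \<in> I" "\<forall>r. (1 - i)*r*b \<in> (jacobson::'a set)" unfolding W_def by blast
    have "\<forall>r. (1 - i)*r*(t*b) \<in> (jacobson::'a set)"
    proof
      fix r have "(1 - i)*(r*t)*b \<in> jacobson" using i(2) by blast
      then show "(1 - i)*r*(t*b) \<in> jacobson" by (simp add: mult.assoc)
    qed
    then show "t*b \<in> W" unfolding W_def using i(1) by blast
  next
    fix t b assume "b \<in> W"
    then obtain i where i: "i \<in> I" "\<forall>r. (1 - i)*r*b \<in> (jacobson::'a set)" unfolding W_def by blast
    have "\<forall>r. (1 - i)*r*(b*t) \<in> (jacobson::'a set)"
    proof
      fix r have "(1 - i)*r*b*t \<in> jacobson" using i(2) jac_rmult by blast
      then show "(1 - i)*r*(b*t) \<in> jacobson" by (simp add: mult.assoc)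
    qed
    then show "b*t \<in> W" unfolding W_def using i(1) by blast
  qed
  have WN: "\<exists>b\<in>W. b \<notin> N" if N: "maximal_ideal N" "K \<subseteq> N" for N
  proof -
    have NC: "N \<notin> C1" using F4 N by blast
    define LN where "LN = {x. \<exists>b. b \<notin> N \<and> (\<forall>r. x*r*b \<in> (jacobson::'a set))}"
    have tL: "tideal LN"
    proof (rule tidealI)
      have "(1::'a) \<notin> N" using maxD(2)[OF N(1)] .
      moreover have "\<forall>r. 0*r*1 \<in> (jacobson::'a set)" using jac_0 by simp
      ultimately show "0 \<in> LN" unfolding LN_def by blast
    next
      fix x1 x2 assume "x1 \<in> LN" "x2 \<in> LN"
      then obtain b1 b2 where b: "b1 \<notin> N" "\<forall>r. x1*r*b1 \<in> (jacobson::'a set)"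
        "b2 \<notin> N" "\<forall>r. x2*r*b2 \<in> (jacobson::'a set)" unfolding LN_def by blast
      have "\<exists>s. b1*s*b2 \<notin> N"
      proof (rule ccontr)
        assume "\<nexists>s. b1*s*b2 \<notin> N"
        then have "\<forall>s. b1*s*b2 \<in> N" by blast
        then show False using max_prime[OF N(1)] b(1,3) by blast
      qed
      then obtain s where s: "b1*s*b2 \<notin> N" by blast
      have "\<forall>r. (x1+x2)*r*(b1*s*b2) \<in> (jacobson::'a set)"
      proof
        fix r
        have eq: "(x1+x2)*r*(b1*s*b2) = (x1*r*b1)*(s*b2) + x2*(r*b1*s)*b2"
          by (simp add: algebra_simps)
        show "(x1+x2)*r*(b1*s*b2) \<in> jacobson" unfolding eq
          using b(2,4) jac_add jac_rmult by blast
      qed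
      then show "x1 + x2 \<in> LN" unfolding LN_def using s by blast
    next
      fix x assume "x \<in> LN"
      then obtain b where b: "b \<notin> N" "\<forall>r. x*r*b \<in> (jacobson::'a set)" unfolding LN_def by blast
      then have "\<forall>r. (-x)*r*b \<in> (jacobson::'a set)" by (auto intro: jac_neg)
      then show "-x \<in> LN" unfolding LN_def using b(1) by blast
    next
      fix t x assume "x \<in> LN"
      then obtain b where b: "b \<notin> N" "\<forall>r. x*r*b \<in> (jacobson::'a set)" unfolding LN_def by blast
      have "\<forall>r. (t*x)*r*b \<in> (jacobson::'a set)"
      proof
        fix r have "t*(x*r*b) \<in> jacobson" using b(2) jac_lmult by blast
        then show "(t*x)*r*b \<in> jacobson" by (simp add: mult.assoc)
      qed
      then show "t*x \<in> LN" unfolding LN_def using b(1) by blast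
    next
      fix t x assume "x \<in> LN"
      then obtain b where b: "b \<notin> N" "\<forall>r. x*r*b \<in> (jacobson::'a set)" unfolding LN_def by blast
      have "\<forall>r. (x*t)*r*b \<in> (jacobson::'a set)"
      proof
        fix r have "x*(t*r)*b \<in> jacobson" using b(2) by blast
        then show "(x*t)*r*b \<in> jacobson" by (simp add: mult.assoc)
      qed
      then show "x*t \<in> LN" unfolding LN_def using b(1) by blast
    qed
    have "\<exists>x\<in>LN. \<exists>i\<in>I. x + i = 1"
    proof (rule comax[OF tL I(1)])
      fix P assume P: "maximal_ideal P" "LN \<subseteq> P" "I \<subseteq> P"
      have "P \<in> C1" using F3 P by blast
      then have "P \<noteq> N" using NC by blast
      then obtain a' b' where ab: "a' \<notin> P" "b' \<notin> N" "\<forall>r. a' * r * b' \<in> (jacobson :: 'a set)"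
        using c2 P(1) N(1) by blast
      then have "a' \<in> LN" unfolding LN_def by blast
      then show False using ab(1) P(2) by blast
    qed
    then obtain x i where xi: "x \<in> LN" "i \<in> I" "x + i = 1" by blast
    then obtain b where b: "b \<notin> N" "\<forall>r. x*r*b \<in> (jacobson::'a set)" unfolding LN_def by blast
    have "x = 1 - i" using xi(3) by (simp add: algebra_simps)
    then have "b \<in> W" unfolding W_def using b(2) xi(2) by blast
    then show ?thesis using b(1) by blast
  qed
  have "\<exists>w\<in>W. \<exists>k\<in>K. w + k = 1"
  proof (rule comax[OF tW K(1)])
    fix P assume P: "maximal_ideal P" "W \<subseteq> P" "K \<subseteq> P"
    then show False using WN[OF P(1,3)] by blast
  qed
  then obtain w k where wk: "w \<in> W" "k \<in> K" "w + k = 1" by blast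
  then obtain i0 where i0: "i0 \<in> I" "\<forall>r. (1 - i0)*r*w \<in> (jacobson::'a set)" unfolding W_def by blast
  define Aset where "Aset = {x. \<forall>r. x*r*w \<in> (jacobson::'a set)}"
  define Bset where "Bset = {y. \<forall>x\<in>Aset. \<forall>r. x*r*y \<in> (jacobson::'a set)}"
  have tA: "tideal Aset"
  proof (rule tidealI)
    show "0 \<in> Aset" unfolding Aset_def using jac_0 by simp
  next
    fix x y assume "x \<in> Aset" "y \<in> Aset" then show "x+y \<in> Aset"
      unfolding Aset_def by (auto simp: distrib_right intro: jac_add)
  next
    fix x assume "x \<in> Aset" then show "-x \<in> Aset" unfolding Aset_def by (auto intro: jac_neg)
  next
    fix t x assume "x \<in> Aset" then show "t*x \<in> Aset" unfolding Aset_def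
      by (auto simp: mult.assoc intro: jac_lmult)
  next
    fix t x assume h: "x \<in> Aset"
    have "\<forall>r. x*t*r*w \<in> (jacobson::'a set)"
    proof
      fix r have "x*(t*r)*w \<in> jacobson" using h unfolding Aset_def by blast
      then show "x*t*r*w \<in> jacobson" by (simp add: mult.assoc)
    qed
    then show "x*t \<in> Aset" unfolding Aset_def by simp
  qed
  have tB: "tideal Bset"
  proof (rule tidealI)
    show "0 \<in> Bset" unfolding Bset_def using jac_0 by auto
  next
    fix x y assume "x \<in> Bset" "y \<in> Bset" then show "x+y \<in> Bset"
      unfolding Bset_def by (auto simp: distrib_left intro: jac_add)
  next
    fix x assume "x \<in> Bset" then show "-x \<in> Bset" unfolding Bset_def by (auto intro: jac_neg)
  next
    fix t y assume h: "y \<in> Bset"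
    have "\<forall>x\<in>Aset. \<forall>r. x*r*(t*y) \<in> (jacobson::'a set)"
    proof (intro ballI allI)
      fix x r assume "x \<in> Aset"
      then have "x*(r*t)*y \<in> jacobson" using h unfolding Bset_def by blast
      then show "x*r*(t*y) \<in> jacobson" by (simp add: mult.assoc)
    qed
    then show "t*y \<in> Bset" unfolding Bset_def by simp
  next
    fix t y assume h: "y \<in> Bset"
    have "\<forall>x\<in>Aset. \<forall>r. x*r*(y*t) \<in> (jacobson::'a set)"
    proof (intro ballI allI)
      fix x r assume "x \<in> Aset"
      then have "x*r*y*t \<in> jacobson" using h jac_rmult unfolding Bset_def by blast
      then show "x*r*(y*t) \<in> jacobson" by (simp add: mult.assoc)
    qed
    then show "y*t \<in> Bset" unfolding Bset_def by simp
  qed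
  have x0A: "1 - i0 \<in> Aset" unfolding Aset_def using i0(2) by simp
  have wB: "w \<in> Bset" unfolding Bset_def Aset_def by simp
  have "\<exists>e\<in>Aset. \<exists>f\<in>Bset. e + f = 1"
  proof (rule comax[OF tA tB])
    fix P assume P: "maximal_ideal P" "Aset \<subseteq> P" "Bset \<subseteq> P"
    show False
    proof (cases "P \<in> C1")
      case True
      then have "i0 \<in> P" using F3 P(1) i0(1) by blast
      moreover have "1 - i0 \<in> P" using x0A P(2) by blast
      ultimately show False using one_notin[OF P(1), of "1 - i0" i0] by simp
    next
      case False
      then have "k \<in> P" using F4 P(1) wk(2) by blast
      moreover have "w \<in> P" using wB P(3) by blast
      ultimately show False using one_notin[OF P(1), of w k] wk(3) by simp
    qed
  qed
  then obtain e f where ef: "e \<in> Aset" "f \<in> Bset" "e + f = 1" by blast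
  have f1: "f = 1 - e" using ef(3) by (simp add: algebra_simps)
  have orth: "\<forall>r. e*r*(1-e) \<in> (jacobson::'a set)" using ef(1,2) f1 unfolding Bset_def by blast
  define u where "u = a - e"
  have "full u" unfolding full_iff
  proof (intro allI impI notI)
    fix M assume M: "maximal_ideal M" "u \<in> M"
    have JM: "jacobson \<subseteq> M" using jac_sub_max[OF M(1)] .
    show False
    proof (cases "M \<in> C1")
      case True
      then have "i0 \<in> M" using F3 M(1) i0(1) by blast
      then have n: "1 - i0 \<notin> M" using one_notin[OF M(1), of "1 - i0" i0] by auto
      have "\<forall>r. (1 - i0)*r*f \<in> M" using x0A ef(2) JM unfolding Bset_def by blast
      then have "f \<in> M" using max_prime[OF M(1)] n by blast
      then have "f - u \<in> M" using tideal_diff[OF maxD(1)[OF M(1)]] M(2) by blast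
      moreover have "f - u = 1 - a" unfolding f1 u_def by (simp add: algebra_simps)
      ultimately show False using F2 True by simp
    next
      case False
      then have "k \<in> M" using F4 M(1) wk(2) by blast
      then have n: "w \<notin> M" using one_notin[OF M(1), of w k] wk(3) by auto
      have "\<forall>r. e*r*w \<in> M" using ef(1) JM unfolding Aset_def by blast
      then have "e \<in> M" using max_prime[OF M(1)] n by blast
      then have "u + e \<in> M" using tideal_add[OF maxD(1)[OF M(1)]] M(2) by blast
      then have "a \<in> M" using u_def by simp
      then show False using F1 M(1) False by blast
    qed
  qed
  moreover have "a = e + u" using u_def by simp
  ultimately show ?thesis unfolding feckly_clean_elem_def using orth by blast
qed

theorem corollary3p6:
  shows "feckly_clean TYPE('a::ring_1) \<longleftrightarrow>
    (Max_strongly_zero_dim TYPE('a) \<and>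
     (\<forall>M N :: 'a set. maximal_ideal M \<and> maximal_ideal N \<and> M \<noteq> N \<longrightarrow>
        (\<exists>a b. a \<notin> M \<and> b \<notin> N \<and> (\<forall>r. a * r * b \<in> (jacobson :: 'a set)))))"
proof
  assume fc: "feckly_clean TYPE('a)"
  show "Max_strongly_zero_dim TYPE('a) \<and>
     (\<forall>M N :: 'a set. maximal_ideal M \<and> maximal_ideal N \<and> M \<noteq> N \<longrightarrow>
        (\<exists>a b. a \<notin> M \<and> b \<notin> N \<and> (\<forall>r. a * r * b \<in> (jacobson :: 'a set))))"
    using fc_szd[OF fc] fc_cond2[OF fc] by blast
next
  assume h: "Max_strongly_zero_dim TYPE('a) \<and>
     (\<forall>M N :: 'a set. maximal_ideal M \<and> maximal_ideal N \<and> M \<noteq> N \<longrightarrow>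
        (\<exists>a b. a \<notin> M \<and> b \<notin> N \<and> (\<forall>r. a * r * b \<in> (jacobson :: 'a set))))"
  show "feckly_clean TYPE('a)" unfolding feckly_clean_def
    using conv[of a] h conv by blast
qed

end
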